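(* For $p=(x,y)\in\mathbb{R}^2_{x<y}:=\{(x,y)\in\mathbb{R}^2\mid x<y\}$ set $\lambda(p):=\dfrac{y-x}{2\|(1,x,y)\|_2}$. For every $K>0$ and every $\alpha\ge 1$, the functions \[ \widetilde{\omega}(p)=\lambda(p)^\alpha,\qquad \omega_K(p)=\frac{2}{\pi}\arctan\!\left(\frac{\lambda(p)^\alpha}{K^\alpha}\right) \] are stable weightings. Moreover, for $\alpha=1$ both $\widetilde{\omega}$ and $\omega_K$ are effective weightings.
   Context: Notation: for $p=(x,y)\in\mathbb{R}^2$ write $(1,p):=(1,x,y)\in\mathbb{R}^3$; $\Delta:=\{(x,y)\mid x=y\}$ and $\|p-\Delta\|_\infty=\frac{y-x}{2}$ for $p\in\mathbb{R}^2_{x<y}$. $B_r=\{p\in\mathbb{R}^2:\|p\|_2\le r\}$, $B_r^c=\mathbb{R}^2\setminus B_r$. A persistence diagram (PD) is a measure $\mu_D=\sum_{p\in D}c_p\delta_p$ with $D\subset\mathbb{R}^2_{x<y}$ finite and $c_p\in\mathbb{N}$. For a measure $\mu$ and $Z\subset\mathbb{R}^2$, $\mathrm{pers}_Z(\mu)=\frac12\int_Z(y-x)\,d\mu((x,y))$. For a weighting $\omega$ (a function with values in $(0,1]$ on the points of diagrams), set $\Gamma_\omega(p):=\omega(p)(1,p)\in\mathbb{R}^3$. A stable weighting is a function $\omega$ with values in $(0,1]$ such that (i) $\Gamma_\omega$ is $C$-Lipschitz (Euclidean norms) for some $C>0$, and (ii) there is $C'>0$ with $\|\Gamma_\omega(p)\|_2\le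 C'\frac{y-x}{2}=C'\|p-\Delta\|_\infty$ for every $p=(x,y)\in\mathbb{R}^2_{x<y}$. An effective weighting is a function $\omega$ with values in $(0,1]$ such that for every sequence of PDs $\{\mu_{D_n}\}_{n\in\mathbb{N}}$: if $\lim_{r\to\infty}\sup_n\int_{B_r^c}\omega(p)\|p\|_2\,d\mu_{D_n}(p)=0$, then $\lim_{r\to\infty}\sup_n\mathrm{pers}_{B_r^c}(\mu_{D_n})=0$. *)

theory Defs
  imports "HOL-Analysis.Analysis" "HOL-Library.Multiset"
begin

text \<open>Points of R^2 are pairs (x,y) :: real \<times> real; the norm on real \<times> real
  (and on real \<times> real \<times> real) is the Euclidean norm.\<close>

definition halfplane :: "(real \<times> real) set" where
  "halfplane = {p. fst p < snd p}"

definition weighting :: "(real \<times> real \<Rightarrow> real) \<Rightarrow> bool" where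
  "weighting \<omega> \<longleftrightarrow> (\<forall>p\<in>halfplane. 0 < \<omega> p \<and> \<omega> p \<le> 1)"

definition Gamma :: "(real \<times> real \<Rightarrow> real) \<Rightarrow> real \<times> real \<Rightarrow> real \<times> real \<times> real" where
  "Gamma \<omega> p = (\<omega> p, \<omega> p * fst p, \<omega> p * snd p)"

definition stable_weighting :: "(real \<times> real \<Rightarrow> real) \<Rightarrow> bool" where
  "stable_weighting \<omega> \<longleftrightarrow> weighting \<omega>
     \<and> (\<exists>C>0. C-lipschitz_on halfplane (Gamma \<omega>))
     \<and> (\<exists>C'>0. \<forall>p\<in>halfplane. norm (Gamma \<omega> p) \<le> C' * ((snd p - fst p) / 2))"

text \<open>A persistence diagram: finite multiset of points of the half-plane
  (the multiplicity of p is the coefficient c_p).\<close>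
definition is_PD :: "(real \<times> real) multiset \<Rightarrow> bool" where
  "is_PD D \<longleftrightarrow> set_mset D \<subseteq> halfplane"

text \<open>Integral of f over the complement of the closed ball B_r against mu_D.\<close>
definition int_outside :: "real \<Rightarrow> (real \<times> real \<Rightarrow> real) \<Rightarrow> (real \<times> real) multiset \<Rightarrow> real" where
  "int_outside r f D = sum_mset (image_mset f (filter_mset (\<lambda>p. r < norm p) D))"

definition pers_outside :: "real \<Rightarrow> (real \<times> real) multiset \<Rightarrow> real" where
  "pers_outside r D = (1/2) * int_outside r (\<lambda>p. snd p - fst p) D"

definition effective_weighting :: "(real \<times> real \<Rightarrow> real) \<Rightarrow> bool" where
  "effective_weighting \<omega> \<longleftrightarrow> weighting \<omega> \<and>
     (\<forall>Ds :: nat \<Rightarrow> (real \<times> real) multiset. (\<forall>n. is_PD (Ds n)) \<longrightarrow>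
        ((\<lambda>r. SUP n. ereal (int_outside r (\<lambda>p. \<omega> p * norm p) (Ds n))) \<longlongrightarrow> 0) at_top \<longrightarrow>
        ((\<lambda>r. SUP n. ereal (pers_outside r (Ds n))) \<longlongrightarrow> 0) at_top)"

definition lam :: "real \<times> real \<Rightarrow> real" where
  "lam p = (snd p - fst p) / (2 * sqrt (1 + (fst p)\<^sup>2 + (snd p)\<^sup>2))"

end

theory Submission imports Defs begin

lemma powr_lip_aux:
  fixes s t a :: real
  assumes "0 < s" "s < t" "t \<le> 1" "1 \<le> a"
  shows "t powr a - s powr a \<le> a * (t - s)"
proof -
  obtain z where z: "s < z" "z < t" "t powr a - s powr a = (t - s) * (a * z powr (a - 1))"
    using MVT2[OF \<open>s < t\<close>, of "\<lambda>z. z powr a" "\<lambda>z. a * z powr (a - 1)"]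
    using assms has_real_derivative_powr by force
  have "z powr (a - 1) \<le> 1" using z assms by (intro powr_le1) auto
  hence "a * z powr (a - 1) \<le> a" using assms by simp
  thus ?thesis using z assms by (simp add: mult_left_mono)
qed

lemma powr_lip:
  fixes s t a :: real
  assumes "0 < s" "s \<le> 1" "0 < t" "t \<le> 1" "1 \<le> a"
  shows "\<bar>s powr a - t powr a\<bar> \<le> a * \<bar>s - t\<bar>"
proof (cases s t rule: linorder_cases)
  case less
  then show ?thesis using powr_lip_aux[of s t a] assms powr_less_mono2[of a s t] by auto
next
  case greater
  then show ?thesis using powr_lip_aux[of t s a] assms powr_less_mono2[of a t s] by auto
qed simp

lemma arctan_lip:
  fixes s t :: real
  shows "\<bar>arctan s - arctan t\<bar> \<le> \<bar>s - t\<bar>"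
proof -
  have aux: "arctan t - arctan s \<le> t - s" if "s < t" for s t :: real
  proof -
    obtain z where z: "s < z" "z < t" "arctan t - arctan s = (t - s) * inverse (1 + z\<^sup>2)"
      using MVT2[OF \<open>s < t\<close>, of arctan "\<lambda>z. inverse (1 + z\<^sup>2)"] DERIV_arctan by force
    have "inverse (1 + z\<^sup>2) \<le> 1" using le_imp_inverse_le[of 1 "1 + z\<^sup>2"] by simp
    thus ?thesis using z by (simp add: mult_left_le)
  qed
  show ?thesis
    using aux[of s t] aux[of t s] arctan_monotone[of s t] arctan_monotone[of t s]
    by (cases s t rule: linorder_cases) auto
qed

lemma arctan_lower:
  fixes t :: real
  assumes "0 < t"
  shows "t / (1 + t\<^sup>2) \<le> arctan t"
proof -
  obtain z where z: "0 < z" "z < t" "arctan t - arctan 0 = (t - 0) * inverse (1 + z\<^sup>2)"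
    using MVT2[OF \<open>0 < t\<close>, of arctan "\<lambda>z. inverse (1 + z\<^sup>2)"] DERIV_arctan by force
  have "1 + z\<^sup>2 \<le> 1 + t\<^sup>2" using z by (simp add: power_strict_mono less_imp_le power_mono)
  hence "inverse (1 + t\<^sup>2) \<le> inverse (1 + z\<^sup>2)"
    by (intro le_imp_inverse_le) (auto simp: add_pos_nonneg)
  hence "t * inverse (1 + t\<^sup>2) \<le> t * inverse (1 + z\<^sup>2)" using assms by (simp add: mult_left_mono)
  thus ?thesis using z by (simp add: divide_inverse)
qed

lemma arctan_le_self: "0 \<le> (t::real) \<Longrightarrow> arctan t \<le> t"
  using arctan_lip[of t 0] by simp


definition vv :: "real \<times> real \<Rightarrow> real \<times> real \<times> real" where
  "vv p = (1, fst p, snd p)"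

definition ell :: "real \<times> real \<times> real \<Rightarrow> real" where
  "ell z = (snd (snd z) - fst (snd z)) / 2"

lemma norm3: "norm ((a::real), (b::real), (c::real)) = sqrt (a\<^sup>2 + b\<^sup>2 + c\<^sup>2)"
  by (simp add: norm_Pair add.assoc)

lemma norm_vv: "norm (vv p) = sqrt (1 + (fst p)\<^sup>2 + (snd p)\<^sup>2)"
  by (cases p) (simp add: vv_def norm3)

lemma norm_vv_ge1: "1 \<le> norm (vv p)"
  unfolding norm_vv by (simp add: add_increasing)

lemma lam_eq: "lam p = ell (vv p) / norm (vv p)"
  by (cases p) (simp add: lam_def ell_def vv_def norm3)

lemma ell_le: "\<bar>ell z\<bar> \<le> norm z"
proof -
  obtain a b c where z: "z = (a, b, c)" by (cases z) auto
  have "\<bar>b\<bar> = sqrt (b\<^sup>2)" by simp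
  also have "\<dots> \<le> sqrt (a\<^sup>2 + b\<^sup>2 + c\<^sup>2)" by (intro real_sqrt_le_mono) simp
  finally have A: "\<bar>b\<bar> \<le> norm z" by (simp add: z norm3)
  have "\<bar>c\<bar> = sqrt (c\<^sup>2)" by simp
  also have "\<dots> \<le> sqrt (a\<^sup>2 + b\<^sup>2 + c\<^sup>2)" by (intro real_sqrt_le_mono) simp
  finally have B: "\<bar>c\<bar> \<le> norm z" by (simp add: z norm3)
  show ?thesis using A B unfolding ell_def z by simp
qed

lemma ell_lin: "ell (c *\<^sub>R v - w) = c * ell v - ell w"
  unfolding ell_def by (simp add: field_simps)

lemma dist_vv: "dist (vv p) (vv q) = dist p q"
  by (cases p, cases q) (simp add: vv_def dist_norm norm3 norm_Pair)

lemma Gamma_vv: "Gamma \<omega> p = \<omega> p *\<^sub>R vv p"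
  by (cases p) (simp add: Gamma_def vv_def)

lemma lam_pos: "p \<in> halfplane \<Longrightarrow> 0 < lam p"
  by (simp add: lam_def halfplane_def add_pos_nonneg)

lemma aux4: "(A::real) \<le> 2 * (B + C) \<Longrightarrow> 0 \<le> B \<Longrightarrow> 0 \<le> C \<Longrightarrow> A < 4 * (1 + B + C)"
  by (simp add: algebra_simps)

lemma ell_zero: "ell 0 = 0" by (simp add: ell_def)

lemma lam_less1: "lam p < 1"
proof -
  have e: "2 * ((fst p)\<^sup>2 + (snd p)\<^sup>2) - (snd p - fst p)\<^sup>2 = (fst p + snd p)\<^sup>2"
    by (simp add: power2_eq_square algebra_simps)
  have "0 \<le> (fst p + snd p)\<^sup>2" by simp
  hence "(snd p - fst p)\<^sup>2 \<le> 2 * ((fst p)\<^sup>2 + (snd p)\<^sup>2)" using e by linarith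
  hence "(snd p - fst p)\<^sup>2 < (2 * sqrt (1 + (fst p)\<^sup>2 + (snd p)\<^sup>2))\<^sup>2"
  proof -
    have s2: "(2 * sqrt (1 + (fst p)\<^sup>2 + (snd p)\<^sup>2))\<^sup>2 = 4 * (1 + (fst p)\<^sup>2 + (snd p)\<^sup>2)"
      by (simp add: power_mult_distrib add_nonneg_nonneg)
    show ?thesis using \<open>(snd p - fst p)\<^sup>2 \<le> 2 * ((fst p)\<^sup>2 + (snd p)\<^sup>2)\<close> unfolding s2
      using aux4[OF _ zero_le_power2[of "fst p"] zero_le_power2[of "snd p"]] by blast
  qed
  hence "snd p - fst p < 2 * sqrt (1 + (fst p)\<^sup>2 + (snd p)\<^sup>2)"
    by (rule power2_less_imp_less) simp
  moreover have "0 < sqrt (1 + (fst p)\<^sup>2 + (snd p)\<^sup>2)" by (simp add: add_pos_nonneg)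
  ultimately show ?thesis by (simp add: lam_def)
qed

lemma key_ineq:
  fixes v w :: "real \<times> real \<times> real"
  assumes "1 \<le> norm v" "1 \<le> norm w"
  shows "\<bar>ell v / norm v - ell w / norm w\<bar> * norm w \<le> 2 * dist v w"
proof -
  have w0: "w \<noteq> 0" using assms by auto
  have v0: "v \<noteq> 0" using assms by auto
  have e: "(ell v / norm v - ell w / norm w) * norm w = (norm w / norm v) * ell v - ell w"
    using assms w0 by (simp add: field_simps)
  have "\<bar>ell v / norm v - ell w / norm w\<bar> * norm w = \<bar>ell ((norm w / norm v) *\<^sub>R v - w)\<bar>"
    unfolding ell_lin e[symmetric] using assms w0 by (simp add: abs_mult)
  also have "\<dots> \<le> norm ((norm w / norm v) *\<^sub>R v - w)" by (rule ell_le)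
  also have "\<dots> \<le> norm ((norm w / norm v) *\<^sub>R v - v) + norm (v - w)"
    by (rule order_trans[OF _ norm_triangle_ineq]) simp
  also have "norm ((norm w / norm v) *\<^sub>R v - v) = \<bar>norm w - norm v\<bar>"
  proof -
    have "(norm w / norm v) *\<^sub>R v - v = ((norm w - norm v) / norm v) *\<^sub>R v"
      using assms by (simp add: algebra_simps diff_divide_distrib)
    thus ?thesis using assms v0 by (simp add: abs_div)
  qed
  also have "\<bar>norm w - norm v\<bar> \<le> norm (v - w)"
    by (metis norm_minus_commute norm_triangle_ineq3)
  finally show ?thesis by (simp add: dist_norm)
qed


lemma gen_lip:
  fixes g :: "real \<Rightarrow> real" and L :: real
  assumes g01: "\<And>t. 0 < t \<Longrightarrow> t < 1 \<Longrightarrow> 0 \<le> g t \<and> g t \<le> 1"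
    and glip: "\<And>s t. 0 < s \<Longrightarrow> s < 1 \<Longrightarrow> 0 < t \<Longrightarrow> t < 1 \<Longrightarrow> \<bar>g s - g t\<bar> \<le> L * \<bar>s - t\<bar>"
    and L: "0 \<le> L"
  shows "(1 + 2 * L)-lipschitz_on halfplane (Gamma (\<lambda>p. g (lam p)))"
proof (rule lipschitz_onI)
  fix p q assume p: "p \<in> halfplane" and q: "q \<in> halfplane"
  define a where "a = lam p"
  define b where "b = lam q"
  have a: "0 < a" "a < 1" using lam_pos[OF p] lam_less1[of p] by (auto simp: a_def)
  have b: "0 < b" "b < 1" using lam_pos[OF q] lam_less1[of q] by (auto simp: b_def)
  have eq: "Gamma (\<lambda>p. g (lam p)) p - Gamma (\<lambda>p. g (lam p)) q
      = g a *\<^sub>R (vv p - vv q) + (g a - g b) *\<^sub>R vv q"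
    by (simp add: Gamma_vv a_def b_def algebra_simps)
  have "dist (Gamma (\<lambda>p. g (lam p)) p) (Gamma (\<lambda>p. g (lam p)) q)
      \<le> norm (g a *\<^sub>R (vv p - vv q)) + norm ((g a - g b) *\<^sub>R vv q)"
    unfolding dist_norm eq by (rule norm_triangle_ineq)
  also have "norm (g a *\<^sub>R (vv p - vv q)) \<le> dist p q"
  proof -
    have "norm (g a *\<^sub>R (vv p - vv q)) = \<bar>g a\<bar> * dist (vv p) (vv q)" by (simp add: dist_norm)
    also have "\<dots> \<le> 1 * dist (vv p) (vv q)"
      using g01[OF a] by (intro mult_right_mono) auto
    finally show ?thesis by (simp add: dist_vv)
  qed
  also have "norm ((g a - g b) *\<^sub>R vv q) \<le> 2 * L * dist p q"
  proof -
    have "norm ((g a - g b) *\<^sub>R vv q) = \<bar>g a - g b\<bar> * norm (vv q)" by simp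
    also have "\<dots> \<le> L * \<bar>a - b\<bar> * norm (vv q)"
      using glip[OF a b] by (intro mult_right_mono) auto
    also have "\<dots> = L * (\<bar>a - b\<bar> * norm (vv q))" by simp
    also have "\<dots> \<le> L * (2 * dist (vv p) (vv q))"
      unfolding a_def b_def lam_eq using key_ineq[OF norm_vv_ge1 norm_vv_ge1] L
      by (intro mult_left_mono) auto
    finally show ?thesis by (simp add: dist_vv)
  qed
  finally show "dist (Gamma (\<lambda>p. g (lam p)) p) (Gamma (\<lambda>p. g (lam p)) q) \<le> (1 + 2 * L) * dist p q"
    by (simp add: algebra_simps)
qed (use L in simp)

lemma gen_bound:
  fixes g :: "real \<Rightarrow> real" and c :: real
  assumes g0: "\<And>t. 0 < t \<Longrightarrow> t < 1 \<Longrightarrow> 0 \<le> g t \<and> g t \<le> c * t"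
  shows "\<forall>p\<in>halfplane. norm (Gamma (\<lambda>p. g (lam p)) p) \<le> c * ((snd p - fst p) / 2)"
proof
  fix p assume p: "p \<in> halfplane"
  have a: "0 < lam p" "lam p < 1" using lam_pos[OF p] lam_less1[of p] by auto
  have "norm (Gamma (\<lambda>p. g (lam p)) p) = \<bar>g (lam p)\<bar> * norm (vv p)" by (simp add: Gamma_vv)
  also have "\<dots> \<le> c * lam p * norm (vv p)"
    using g0[OF a] by (intro mult_right_mono) auto
  also have "\<dots> = c * ((snd p - fst p) / 2)"
  proof -
    have nz: "norm (vv p) \<noteq> 0" using norm_vv_ge1[of p] by linarith
    have "ell (vv p) = (snd p - fst p) / 2" by (simp add: ell_def vv_def)
    thus ?thesis using nz by (simp add: lam_eq)
  qed
  finally show "norm (Gamma (\<lambda>p. g (lam p)) p) \<le> c * ((snd p - fst p) / 2)" .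
qed


lemma msum_le:
  fixes f g :: "'a \<Rightarrow> real"
  shows "(\<And>p. p \<in># M \<Longrightarrow> f p \<le> c * g p) \<Longrightarrow> sum_mset (image_mset f M) \<le> c * sum_mset (image_mset g M)"
  by (induction M) (auto simp: distrib_left intro!: add_mono)

lemma msum_nonneg:
  fixes f :: "'a \<Rightarrow> real"
  shows "(\<And>p. p \<in># M \<Longrightarrow> 0 \<le> f p) \<Longrightarrow> 0 \<le> sum_mset (image_mset f M)"
  by (induction M) auto

lemma gen_eff:
  assumes w: "weighting \<omega>" and c: "0 < c"
    and key: "\<And>p. p \<in> halfplane \<Longrightarrow> 1 \<le> norm p \<Longrightarrow> snd p - fst p \<le> c * (\<omega> p * norm p)"
  shows "effective_weighting \<omega>"
  unfolding effective_weighting_def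
proof (intro conjI allI impI)
  show "weighting \<omega>" by (rule w)
  fix Ds :: "nat \<Rightarrow> (real \<times> real) multiset"
  assume PD: "\<forall>n. is_PD (Ds n)"
  assume lim: "((\<lambda>r. SUP n. ereal (int_outside r (\<lambda>p. \<omega> p * norm p) (Ds n))) \<longlongrightarrow> 0) at_top"
  define I where "I r = (SUP n. ereal (int_outside r (\<lambda>p. \<omega> p * norm p) (Ds n)))" for r
  define P where "P r = (SUP n. ereal (pers_outside r (Ds n)))" for r
  have memb: "p \<in> halfplane \<and> r < norm p" if "p \<in># filter_mset (\<lambda>p. r < norm p) (Ds n)" for p r n
    using that PD unfolding is_PD_def by auto
  have bnd: "0 \<le> pers_outside r (Ds n) \<and> pers_outside r (Ds n) \<le> (c / 2) * int_outside r (\<lambda>p. \<omega> p * norm p) (Ds n)"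
    if r: "1 \<le> r" for r n
  proof
    show "0 \<le> pers_outside r (Ds n)"
      unfolding pers_outside_def int_outside_def
    proof (rule mult_nonneg_nonneg)
      show "0 \<le> sum_mset (image_mset (\<lambda>p. snd p - fst p) (filter_mset (\<lambda>p. r < norm p) (Ds n)))"
      proof (rule msum_nonneg)
        fix p assume "p \<in># filter_mset (\<lambda>p. r < norm p) (Ds n)"
        from memb[OF this] show "0 \<le> snd p - fst p" by (simp add: halfplane_def)
      qed
    qed simp
    have "int_outside r (\<lambda>p. snd p - fst p) (Ds n) \<le> c * int_outside r (\<lambda>p. \<omega> p * norm p) (Ds n)"
      unfolding int_outside_def
    proof (rule msum_le)
      fix p assume "p \<in># filter_mset (\<lambda>p. r < norm p) (Ds n)"
      from memb[OF this] have "p \<in> halfplane" "1 \<le> norm p" using r by auto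
      thus "snd p - fst p \<le> c * (\<omega> p * norm p)" by (rule key)
    qed
    thus "pers_outside r (Ds n) \<le> (c / 2) * int_outside r (\<lambda>p. \<omega> p * norm p) (Ds n)"
      unfolding pers_outside_def by simp
  qed
  have ev1: "eventually (\<lambda>r. 0 \<le> P r) at_top"
    using eventually_ge_at_top[of "1::real"]
  proof eventually_elim
    case (elim r)
    have "ereal 0 \<le> ereal (pers_outside r (Ds 0))" using bnd[OF elim] by simp
    also have "\<dots> \<le> P r" unfolding P_def by (rule SUP_upper) simp
    finally show ?case by (simp add: zero_ereal_def)
  qed
  have ev2: "eventually (\<lambda>r. P r \<le> ereal (c / 2) * I r) at_top"
    using eventually_ge_at_top[of "1::real"]
  proof eventually_elim
    case (elim r)
    show ?case unfolding P_def
    proof (rule SUP_least)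
      fix n
      have "ereal (pers_outside r (Ds n)) \<le> ereal (c / 2) * ereal (int_outside r (\<lambda>p. \<omega> p * norm p) (Ds n))"
        using bnd[OF elim, of n] by simp
      also have "\<dots> \<le> ereal (c / 2) * I r"
        unfolding I_def using c by (intro ereal_mult_left_mono SUP_upper) auto
      finally show "ereal (pers_outside r (Ds n)) \<le> ereal (c / 2) * I r" .
    qed
  qed
  have lim2: "((\<lambda>r. ereal (c / 2) * I r) \<longlongrightarrow> 0) at_top"
    using tendsto_cmult_ereal[of "ereal (c/2)" I 0 at_top] lim unfolding I_def by simp
  show "((\<lambda>r. SUP n. ereal (pers_outside r (Ds n))) \<longlongrightarrow> 0) at_top"
    using tendsto_sandwich[OF ev1 ev2 tendsto_const lim2] unfolding P_def by simp
qed


lemma eff_base: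
  assumes p: "p \<in> halfplane" and n: "1 \<le> norm p"
  shows "snd p - fst p \<le> 4 * (lam p * norm p)"
proof -
  have nz: "norm (vv p) \<noteq> 0" using norm_vv_ge1[of p] by linarith
  have e: "lam p * norm (vv p) = (snd p - fst p) / 2"
    using nz by (simp add: lam_eq ell_def vv_def)
  have "vv p = (1, p)" by (simp add: vv_def)
  hence "norm (vv p) \<le> 1 + norm p" using norm_Pair_le[of "1::real" p] by simp
  hence "norm (vv p) \<le> 2 * norm p" using n by linarith
  hence "lam p * norm (vv p) \<le> lam p * (2 * norm p)"
    using lam_pos[OF p] by (intro mult_left_mono) auto
  thus ?thesis using e by simp
qed

lemma eff_from_lower:
  assumes w: "weighting \<omega>" and m: "0 < m" and low: "\<And>p. p \<in> halfplane \<Longrightarrow> m * lam p \<le> \<omega> p"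
  shows "effective_weighting \<omega>"
proof (rule gen_eff[OF w, of "4 / m"])
  show "0 < 4 / m" using m by simp
  fix p assume p: "p \<in> halfplane" and n: "1 \<le> norm p"
  have "snd p - fst p \<le> 4 * (lam p * norm p)" by (rule eff_base[OF p n])
  also have "\<dots> = (4 / m) * ((m * lam p) * norm p)" using m by simp
  also have "\<dots> \<le> (4 / m) * (\<omega> p * norm p)"
    using low[OF p] m by (intro mult_left_mono mult_right_mono) auto
  finally show "snd p - fst p \<le> 4 / m * (\<omega> p * norm p)" .
qed

lemma stable_from_g:
  fixes g :: "real \<Rightarrow> real"
  assumes pos: "\<And>t. 0 < t \<Longrightarrow> t < 1 \<Longrightarrow> 0 < g t \<and> g t \<le> 1"
    and glip: "\<And>s t. 0 < s \<Longrightarrow> s < 1 \<Longrightarrow> 0 < t \<Longrightarrow> t < 1 \<Longrightarrow> \<bar>g s - g t\<bar> \<le> L * \<bar>s - t\<bar>"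
    and L: "0 \<le> L"
    and cb: "\<And>t. 0 < t \<Longrightarrow> t < 1 \<Longrightarrow> g t \<le> c * t" and c: "0 < c"
  shows "stable_weighting (\<lambda>p. g (lam p))"
  unfolding stable_weighting_def
proof (intro conjI)
  show "weighting (\<lambda>p. g (lam p))"
    unfolding weighting_def using pos lam_pos lam_less1 by blast
  show "\<exists>C>0. C-lipschitz_on halfplane (Gamma (\<lambda>p. g (lam p)))"
    using gen_lip[of g L] pos glip L by (intro exI[of _ "1 + 2 * L"]) force
  show "\<exists>C'>0. \<forall>p\<in>halfplane. norm (Gamma (\<lambda>p. g (lam p)) p) \<le> C' * ((snd p - fst p) / 2)"
    using gen_bound[of g c] pos cb c by (intro exI[of _ c]) force
qed


lemma stable1:
  assumes a: "1 \<le> \<alpha>"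
  shows "stable_weighting (\<lambda>p. lam p powr \<alpha>)"
proof (rule stable_from_g[where g = "\<lambda>t. t powr \<alpha>" and L = \<alpha> and c = 1])
  fix t :: real assume t: "0 < t" "t < 1"
  show "0 < t powr \<alpha> \<and> t powr \<alpha> \<le> 1" using t a by (auto intro: powr_le1)
  have "t powr \<alpha> \<le> t powr 1" using t a by (intro powr_mono') auto
  thus "t powr \<alpha> \<le> 1 * t" using t by simp
next
  fix s t :: real assume "0 < s" "s < 1" "0 < t" "t < 1"
  thus "\<bar>s powr \<alpha> - t powr \<alpha>\<bar> \<le> \<alpha> * \<bar>s - t\<bar>" using a by (intro powr_lip) auto
qed (use a in auto)

lemma stable2:
  assumes K: "0 < K" and a: "1 \<le> \<alpha>"
  shows "stable_weighting (\<lambda>p. 2 / pi * arctan (lam p powr \<alpha> / K powr \<alpha>))"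
proof (rule stable_from_g[where g = "\<lambda>t. 2 / pi * arctan (t powr \<alpha> / K powr \<alpha>)"
      and L = "2 / pi * \<alpha> / K powr \<alpha>" and c = "2 / (pi * K powr \<alpha>)"])
  have Kp: "0 < K powr \<alpha>" using K by simp
  fix t :: real assume t: "0 < t" "t < 1"
  have tp: "0 < t powr \<alpha>" using t by simp
  have "0 < arctan (t powr \<alpha> / K powr \<alpha>)" using tp Kp by simp
  moreover have "arctan (t powr \<alpha> / K powr \<alpha>) < pi / 2" by (rule arctan_ubound)
  ultimately show "0 < 2 / pi * arctan (t powr \<alpha> / K powr \<alpha>) \<and> 2 / pi * arctan (t powr \<alpha> / K powr \<alpha>) \<le> 1"
    by (auto simp: field_simps)
  have "arctan (t powr \<alpha> / K powr \<alpha>) \<le> t powr \<alpha> / K powr \<alpha>"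
    using tp Kp by (intro arctan_le_self) simp
  also have "\<dots> \<le> t / K powr \<alpha>"
  proof -
    have "t powr \<alpha> \<le> t powr 1" using t a by (intro powr_mono') auto
    thus ?thesis using t Kp by (simp add: divide_right_mono)
  qed
  finally have "2 / pi * arctan (t powr \<alpha> / K powr \<alpha>) \<le> 2 / pi * (t / K powr \<alpha>)"
    by (intro mult_left_mono) auto
  thus "2 / pi * arctan (t powr \<alpha> / K powr \<alpha>) \<le> 2 / (pi * K powr \<alpha>) * t" by simp
next
  have Kp: "0 < K powr \<alpha>" using K by simp
  fix s t :: real assume st: "0 < s" "s < 1" "0 < t" "t < 1"
  have "\<bar>2 / pi * arctan (s powr \<alpha> / K powr \<alpha>) - 2 / pi * arctan (t powr \<alpha> / K powr \<alpha>)\<bar>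
      = 2 / pi * \<bar>arctan (s powr \<alpha> / K powr \<alpha>) - arctan (t powr \<alpha> / K powr \<alpha>)\<bar>"
    unfolding right_diff_distrib[symmetric] abs_mult by simp
  also have "\<dots> \<le> 2 / pi * \<bar>s powr \<alpha> / K powr \<alpha> - t powr \<alpha> / K powr \<alpha>\<bar>"
    by (intro mult_left_mono arctan_lip) auto
  also have "\<bar>s powr \<alpha> / K powr \<alpha> - t powr \<alpha> / K powr \<alpha>\<bar> = \<bar>s powr \<alpha> - t powr \<alpha>\<bar> / K powr \<alpha>"
    using Kp by (simp add: diff_divide_distrib[symmetric])
  also have "2 / pi * (\<bar>s powr \<alpha> - t powr \<alpha>\<bar> / K powr \<alpha>) \<le> 2 / pi * (\<alpha> * \<bar>s - t\<bar> / K powr \<alpha>)"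
    using powr_lip[of s t \<alpha>] st a Kp by (intro mult_left_mono divide_right_mono) auto
  also have "2 / pi * (\<alpha> * \<bar>s - t\<bar> / K powr \<alpha>) = 2 / pi * \<alpha> / K powr \<alpha> * \<bar>s - t\<bar>"
    by simp
  finally show "\<bar>2 / pi * arctan (s powr \<alpha> / K powr \<alpha>) - 2 / pi * arctan (t powr \<alpha> / K powr \<alpha>)\<bar>
      \<le> 2 / pi * \<alpha> / K powr \<alpha> * \<bar>s - t\<bar>" .
qed (use a K in auto)


lemma eff1: "effective_weighting (\<lambda>p. lam p powr 1)"
proof (rule eff_from_lower[of _ 1])
  show "weighting (\<lambda>p. lam p powr 1)" using stable1[of 1] by (simp add: stable_weighting_def)
  fix p assume "p \<in> halfplane"
  thus "1 * lam p \<le> lam p powr 1" using lam_pos by simp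
qed simp

lemma eff2:
  assumes K: "0 < K"
  shows "effective_weighting (\<lambda>p. 2 / pi * arctan (lam p powr 1 / K powr 1))"
proof (rule eff_from_lower[of _ "2 / pi / K / (1 + 1 / K\<^sup>2)"])
  show "weighting (\<lambda>p. 2 / pi * arctan (lam p powr 1 / K powr 1))"
    using stable2[OF K, of 1] by (simp add: stable_weighting_def)
  show "0 < 2 / pi / K / (1 + 1 / K\<^sup>2)" using K by (simp add: add_pos_pos)
  fix p assume p: "p \<in> halfplane"
  define t where "t = lam p / K"
  have l: "0 < lam p" "lam p < 1" using lam_pos[OF p] lam_less1[of p] by auto
  have t: "0 < t" "t < 1 / K" using l K by (auto simp: t_def divide_strict_right_mono)
  have "t\<^sup>2 \<le> (1 / K)\<^sup>2" using t by (intro power_mono) auto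
  hence den: "1 + t\<^sup>2 \<le> 1 + 1 / K\<^sup>2" by (simp add: power_divide)
  have "t / (1 + 1 / K\<^sup>2) \<le> t / (1 + t\<^sup>2)"
    using t den by (intro divide_left_mono) (auto simp: add_pos_nonneg)
  also have "\<dots> \<le> arctan t" by (rule arctan_lower[OF t(1)])
  finally have "2 / pi * (t / (1 + 1 / K\<^sup>2)) \<le> 2 / pi * arctan t"
    by (intro mult_left_mono) auto
  moreover have "2 / pi / K / (1 + 1 / K\<^sup>2) * lam p = 2 / pi * (t / (1 + 1 / K\<^sup>2))"
    by (simp add: t_def)
  moreover have "lam p powr 1 / K powr 1 = t" using l K by (simp add: t_def)
  ultimately show "2 / pi / K / (1 + 1 / K\<^sup>2) * lam p \<le> 2 / pi * arctan (lam p powr 1 / K powr 1)"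
    by simp
qed

theorem mainTheorem1:
  shows "(\<forall>K::real. \<forall>\<alpha>::real. K > 0 \<and> \<alpha> \<ge> 1 \<longrightarrow>
            stable_weighting (\<lambda>p. lam p powr \<alpha>) \<and>
            stable_weighting (\<lambda>p. 2 / pi * arctan (lam p powr \<alpha> / K powr \<alpha>)))
       \<and> effective_weighting (\<lambda>p. lam p powr 1)
       \<and> (\<forall>K::real. K > 0 \<longrightarrow> effective_weighting (\<lambda>p. 2 / pi * arctan (lam p powr 1 / K powr 1)))"
  using stable1 stable2 eff1 eff2 by blast

end
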